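(* Let $R$ be a unital commutative ring and $g\in\mathrm{SL}_d(R)$, and let \[ \mathbf{L}_g(R)=\{(w,\,g^{-1}\theta(w)g):w\in\mathbf{H}_{\tau(g)}(R)\}. \] Then $\mathbf{L}_g(R)$ is a subgroup of $\mathrm{SO}_Q(R)\times\mathrm{ASL}_{d-1}(R)$, and it is exactly the stabilizer of $g$ under the right action $g\cdot(\rho,\eta)=\theta(\rho)^{-1}g\eta$ of $\mathrm{SO}_Q(R)\times\mathrm{ASL}_{d-1}(R)$ on $\mathrm{SL}_d(R)$.
   Context: $Q(\mathbf{x})=\mathbf{x}^tM\mathbf{x}$ with $M\in M_d(\mathbb{Z})$ symmetric (integral quadratic form), $\mathrm{SO}_Q(R)=\{h\in\mathrm{SL}_d(R):h^tMh=M\}$, and for $\mathbf{v}\in R^d$, $\mathbf{H}_{\mathbf{v}}(R)=\{h\in\mathrm{SO}_Q(R):h\mathbf{v}=\mathbf{v}\}$. $\theta(g)=(g^t)^{-1}$, $\tau(g)=\theta(g)\mathbf{e}_d$. $\mathrm{ASL}_{d-1}(R)\le\mathrm{SL}_d(R)$ is the group of matrices $\begin{pmatrix}m&\mathbf{w}\\ \mathbf{0}&1\end{pmatrix}$, $m\in\mathrm{SL}_{d-1}(R)$, $\mathbf{w}\in R^{d-1}$. *)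

theory Defs
  imports "Jordan_Normal_Form.Determinant"
begin

(* Matrices over a unital commutative ring 'a, using Jordan_Normal_Form's 'a mat.
   Indices are 0-based: e_d is unit_vec d (d - 1). *)

definition SL :: "nat \<Rightarrow> 'a::comm_ring_1 mat set" where
  "SL d = {g \<in> carrier_mat d d. det g = 1}"

definition mat_inverse :: "'a::comm_ring_1 mat \<Rightarrow> 'a mat" where
  "mat_inverse A = (SOME B. B \<in> carrier_mat (dim_row A) (dim_row A)
                         \<and> A * B = 1\<^sub>m (dim_row A) \<and> B * A = 1\<^sub>m (dim_row A))"

(* SO_Q(R) for Q(x) = x^t M x, M an integral matrix, viewed over R *)
definition SO_Q :: "nat \<Rightarrow> int mat \<Rightarrow> 'a::comm_ring_1 mat set" where
  "SO_Q d M = {h \<in> SL d. transpose_mat h * map_mat of_int M * h = map_mat of_int M}"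

definition H_stab :: "nat \<Rightarrow> int mat \<Rightarrow> 'a::comm_ring_1 vec \<Rightarrow> 'a mat set" where
  "H_stab d M v = {h \<in> SO_Q d M. h *\<^sub>v v = v}"

definition theta :: "'a::comm_ring_1 mat \<Rightarrow> 'a mat" where
  "theta g = mat_inverse (transpose_mat g)"

definition tau :: "'a::comm_ring_1 mat \<Rightarrow> 'a vec" where
  "tau g = theta g *\<^sub>v unit_vec (dim_row g) (dim_row g - 1)"

(* ASL_n(R) inside SL_{n+1}(R): block matrices (m w; 0 1) *)
definition ASL :: "nat \<Rightarrow> 'a::comm_ring_1 mat set" where
  "ASL n = {four_block_mat m w (0\<^sub>m 1 n) (1\<^sub>m 1) | m w.
              m \<in> carrier_mat n n \<and> det m = 1 \<and> w \<in> carrier_mat n 1}"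

definition L_grp :: "nat \<Rightarrow> int mat \<Rightarrow> 'a::comm_ring_1 mat \<Rightarrow> ('a mat \<times> 'a mat) set" where
  "L_grp d M g = {(w, mat_inverse g * theta w * g) | w. w \<in> H_stab d M (tau g)}"

definition act :: "'a::comm_ring_1 mat \<Rightarrow> 'a mat \<times> 'a mat \<Rightarrow> 'a mat" where
  "act g p = mat_inverse (theta (fst p)) * g * snd p"

definition stabilizer :: "nat \<Rightarrow> int mat \<Rightarrow> 'a::comm_ring_1 mat \<Rightarrow> ('a mat \<times> 'a mat) set" where
  "stabilizer d M g = {p \<in> SO_Q d M \<times> ASL (d - 1). act g p = g}"

end

theory Submission imports Defs begin

lemma scalar_unit: fixes v :: "'a::comm_ring_1 vec" assumes "v \<in> carrier_vec n" "i < n"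
  shows "v \<bullet> unit_vec n i = v $ i"
proof -
  have "v \<bullet> unit_vec n i = (\<Sum>k\<in>{0..<n}. v $ k * unit_vec n i $ k)"
    unfolding scalar_prod_def using assms by auto
  also have "\<dots> = (\<Sum>k\<in>{0..<n}. if k = i then v $ k else 0)"
    using assms by (intro sum.cong) auto
  also have "\<dots> = v $ i" using assms by (simp add: sum.delta)
  finally show ?thesis .
qed

lemma last_row_iff: fixes A :: "'a::comm_ring_1 mat" assumes "A \<in> carrier_mat n n" "i < n"
  shows "(transpose_mat A *\<^sub>v unit_vec n i = unit_vec n i) \<longleftrightarrow>
     (\<forall>j<n. A $$ (i, j) = (if j = i then 1 else 0))"
proof -
  have "\<And>j. j < n \<Longrightarrow> (transpose_mat A *\<^sub>v unit_vec n i) $ j = A $$ (i,j)"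
    using assms scalar_unit[of "col A _" n i] by simp
  then show ?thesis using assms
    by (auto simp: vec_eq_iff)
qed

lemma inv_ex: assumes "A \<in> carrier_mat n n" "det A = 1"
  shows "mat_inverse A \<in> carrier_mat n n \<and> A * mat_inverse A = 1\<^sub>m n \<and> mat_inverse A * A = 1\<^sub>m n"
proof -
  have dr: "dim_row A = n" using assms by auto
  have "\<exists>B. B \<in> carrier_mat n n \<and> A * B = 1\<^sub>m n \<and> B * A = 1\<^sub>m n"
    using adj_mat[OF assms(1)] assms(2) by (intro exI[of _ "adj_mat A"]) auto
  from someI_ex[OF this] show ?thesis unfolding mat_inverse_def dr .
qed

lemma inv_unique: assumes "A \<in> carrier_mat n n" "det A = 1" "B \<in> carrier_mat n n" "A * B = 1\<^sub>m n"
  shows "mat_inverse A = B"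
proof -
  from inv_ex[OF assms(1,2)] have i: "mat_inverse A \<in> carrier_mat n n" "mat_inverse A * A = 1\<^sub>m n" by auto
  have "mat_inverse A = mat_inverse A * (A * B)" unfolding assms(4) by (rule right_mult_one_mat[OF i(1), symmetric])
  also have "\<dots> = (mat_inverse A * A) * B" by (rule assoc_mult_mat[OF i(1) assms(1) assms(3), symmetric])
  also have "\<dots> = B" using i assms by simp
  finally show ?thesis .
qed

lemma ASL_char: assumes "E \<in> carrier_mat (Suc n) (Suc n)"
  shows "E \<in> ASL n \<longleftrightarrow> det E = 1 \<and> (\<forall>j<Suc n. E $$ (n, j) = (if j = n then 1 else 0))"
proof
  assume "E \<in> ASL n"
  then obtain m w where E: "E = four_block_mat m w (0\<^sub>m 1 n) (1\<^sub>m 1)" and m: "m \<in> carrier_mat n n" "det m = 1" and w: "w \<in> carrier_mat n 1"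
    unfolding ASL_def by auto
  have "transpose_mat E = four_block_mat (transpose_mat m) (0\<^sub>m n 1) (transpose_mat w) (1\<^sub>m 1)"
    unfolding E by (subst transpose_four_block_mat[OF m(1) w]) auto
  hence "det (transpose_mat E) = det (transpose_mat m) * det (1\<^sub>m 1 :: 'a mat)"
    using m w by (simp add: det_four_block_mat_upper_right_zero_col)
  hence "det E = 1" using m det_transpose[OF m(1)] det_transpose[OF assms] by simp
  moreover have "\<forall>j<Suc n. E $$ (n, j) = (if j = n then 1 else 0)"
    unfolding E using m w by auto
  ultimately show "det E = 1 \<and> (\<forall>j<Suc n. E $$ (n, j) = (if j = n then 1 else 0))" by auto
next
  assume h: "det E = 1 \<and> (\<forall>j<Suc n. E $$ (n, j) = (if j = n then 1 else 0))"
  obtain A1 A2 A3 A4 where sb: "split_block E n n = (A1,A2,A3,A4)" by (cases "split_block E n n") auto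
  have dims: "dim_row E = n + 1" "dim_col E = n + 1" using assms by auto
  note S = split_block[OF sb dims]
  have A3: "A3 = 0\<^sub>m 1 n" using sb h assms unfolding split_block_def Let_def by auto
  have A4: "A4 = 1\<^sub>m 1" using sb h assms unfolding split_block_def Let_def by auto
  have E: "E = four_block_mat A1 A2 (0\<^sub>m 1 n) (1\<^sub>m 1)" using S A3 A4 by simp
  have "transpose_mat E = four_block_mat (transpose_mat A1) (0\<^sub>m n 1) (transpose_mat A2) (1\<^sub>m 1)"
    unfolding E by (subst transpose_four_block_mat[OF S(1,2)]) auto
  hence "det (transpose_mat E) = det (transpose_mat A1) * det (1\<^sub>m 1 :: 'a mat)"
    using S by (simp add: det_four_block_mat_upper_right_zero_col)
  hence "det A1 = 1" using h det_transpose[OF S(1)] det_transpose[OF assms] by simp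
  then show "E \<in> ASL n" unfolding ASL_def using E S by blast
qed


lemma SL_carrier: "g \<in> SL d \<Longrightarrow> g \<in> carrier_mat d d" unfolding SL_def by auto
lemma SL_det: "g \<in> SL d \<Longrightarrow> det g = 1" unfolding SL_def by auto

lemma SL_mult: assumes "a \<in> SL d" "b \<in> SL d" shows "a * b \<in> SL d"
  using assms det_mult[OF SL_carrier[OF assms(1)] SL_carrier[OF assms(2)]] unfolding SL_def by auto

lemma SL_inv: assumes "a \<in> SL d"
  shows "mat_inverse a \<in> SL d" "a * mat_inverse a = 1\<^sub>m d" "mat_inverse a * a = 1\<^sub>m d"
proof -
  note i = inv_ex[OF SL_carrier[OF assms] SL_det[OF assms]]
  have "det (a * mat_inverse a) = det a * det (mat_inverse a)"
    using i SL_carrier[OF assms] det_mult by blast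
  hence "det (mat_inverse a) = 1" using i SL_det[OF assms] by simp
  thus "mat_inverse a \<in> SL d" using i unfolding SL_def by auto
  show "a * mat_inverse a = 1\<^sub>m d" "mat_inverse a * a = 1\<^sub>m d" using i by auto
qed

lemma SL_transpose: assumes "a \<in> SL d" shows "transpose_mat a \<in> SL d"
  using assms det_transpose[OF SL_carrier[OF assms]] unfolding SL_def by auto

lemma SL_one: "1\<^sub>m d \<in> SL d" unfolding SL_def by auto

lemma SL_inv_unique: assumes "a \<in> SL d" "b \<in> carrier_mat d d" "a * b = 1\<^sub>m d"
  shows "mat_inverse a = b"
  using inv_unique[OF SL_carrier[OF assms(1)] SL_det[OF assms(1)] assms(2,3)] .

lemma theta_SL: assumes "a \<in> SL d" shows "theta a \<in> SL d"
  "transpose_mat a * theta a = 1\<^sub>m d" "theta a * transpose_mat a = 1\<^sub>m d"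
  unfolding theta_def using SL_inv[OF SL_transpose[OF assms]] by auto

lemma inv_theta: assumes "a \<in> SL d" shows "mat_inverse (theta a) = transpose_mat a"
  by (rule SL_inv_unique[OF theta_SL(1)[OF assms]]) (use theta_SL[OF assms] SL_carrier[OF assms] in auto)

lemma transpose_inv: assumes "a \<in> SL d" shows "transpose_mat (mat_inverse a) = theta a"
proof -
  note c = SL_carrier[OF assms] SL_carrier[OF SL_inv(1)[OF assms]]
  have "transpose_mat a * transpose_mat (mat_inverse a) = transpose_mat (mat_inverse a * a)"
    using c by (simp add: transpose_mult)
  also have "\<dots> = 1\<^sub>m d" using SL_inv[OF assms] by simp
  finally have eq: "transpose_mat a * transpose_mat (mat_inverse a) = 1\<^sub>m d" .
  have "mat_inverse (transpose_mat a) = transpose_mat (mat_inverse a)"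
    by (rule SL_inv_unique[OF SL_transpose[OF assms]]) (use c eq in auto)
  thus ?thesis unfolding theta_def by simp
qed

lemma theta_mult: assumes "a \<in> SL d" "b \<in> SL d" shows "theta (a * b) = theta a * theta b"
  unfolding theta_def[of "a*b"]
proof (rule SL_inv_unique)
  note c = SL_carrier[OF assms(1)] SL_carrier[OF assms(2)] SL_carrier[OF theta_SL(1)[OF assms(1)]] SL_carrier[OF theta_SL(1)[OF assms(2)]]
    SL_carrier[OF SL_transpose[OF assms(1)]] SL_carrier[OF SL_transpose[OF assms(2)]]
  show "transpose_mat (a * b) \<in> SL d" using SL_transpose SL_mult assms by blast
  show "theta a * theta b \<in> carrier_mat d d" using c by auto
  have "transpose_mat (a * b) * (theta a * theta b) = (transpose_mat b * transpose_mat a) * (theta a * theta b)"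
    using c by (simp add: transpose_mult del: assoc_mult_mat)
  also have "\<dots> = transpose_mat b * (transpose_mat a * (theta a * theta b))"
    by (rule assoc_mult_mat[OF c(6) c(5) mult_carrier_mat[OF c(3) c(4)]])
  also have "transpose_mat a * (theta a * theta b) = (transpose_mat a * theta a) * theta b"
    by (rule assoc_mult_mat[OF c(5) c(3) c(4), symmetric])
  also have "(transpose_mat a * theta a) * theta b = theta b" using theta_SL[OF assms(1)] c by simp
  also have "transpose_mat b * theta b = 1\<^sub>m d" using theta_SL[OF assms(2)] by simp
  finally show "transpose_mat (a * b) * (theta a * theta b) = 1\<^sub>m d" .
qed

lemma theta_one: "theta (1\<^sub>m d) = 1\<^sub>m d"
  unfolding theta_def by (rule SL_inv_unique) (auto intro: SL_one)

lemma theta_inv: assumes "a \<in> SL d" shows "theta (mat_inverse a) = mat_inverse (theta a)"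
proof -
  have "theta a * theta (mat_inverse a) = theta (a * mat_inverse a)"
    using theta_mult[OF assms SL_inv(1)[OF assms]] by simp
  also have "\<dots> = 1\<^sub>m d" using SL_inv(2)[OF assms] theta_one by simp
  finally have ee: "theta a * theta (mat_inverse a) = 1\<^sub>m d" .
  show ?thesis using SL_inv_unique[OF theta_SL(1)[OF assms] _ ee] SL_carrier[OF theta_SL(1)[OF SL_inv(1)[OF assms]]] by simp
qed

lemma inv_inv: assumes "a \<in> SL d" shows "mat_inverse (mat_inverse a) = a"
  by (rule SL_inv_unique) (use SL_inv[OF assms] SL_carrier[OF assms] in auto)


lemma vec_cancel: fixes A :: "'a::comm_ring_1 mat" assumes "A \<in> carrier_mat d d" "B \<in> carrier_mat d d" "A * B = 1\<^sub>m d" "v \<in> carrier_vec d"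
  shows "A *\<^sub>v (B *\<^sub>v v) = v"
proof -
  have "(A * B) *\<^sub>v v = A *\<^sub>v (B *\<^sub>v v)" by (rule assoc_mult_mat_vec[OF assms(1,2,4)])
  thus ?thesis using assms(3,4) by simp
qed

lemma keyK: fixes g :: "'a::comm_ring_1 mat" assumes g: "g \<in> SL d" and w: "w \<in> SL d" and dn: "d = Suc n"
  shows "(transpose_mat (mat_inverse g * theta w * g) *\<^sub>v unit_vec d n = unit_vec d n) \<longleftrightarrow> w *\<^sub>v tau g = tau g"
proof -
  define e :: "'a vec" where "e = unit_vec d n"
  have ec: "e \<in> carrier_vec d" unfolding e_def by simp
  have cg: "g \<in> carrier_mat d d" using SL_carrier[OF g] .
  have tau: "tau g = theta g *\<^sub>v e" unfolding tau_def e_def using cg dn by simp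
  note gi = SL_inv[OF g] and wi = SL_inv[OF w] and tg = theta_SL[OF g] and tw = theta_SL[OF w]
  have cgi: "mat_inverse g \<in> carrier_mat d d" using SL_carrier gi by blast
  have cwi: "mat_inverse w \<in> carrier_mat d d" using SL_carrier wi by blast
  have ctg: "theta g \<in> carrier_mat d d" using SL_carrier tg by blast
  have ctw: "theta w \<in> carrier_mat d d" using SL_carrier tw by blast
  have cw: "w \<in> carrier_mat d d" using SL_carrier w by blast
  have cgT: "transpose_mat g \<in> carrier_mat d d" using cg by simp
  have tc: "tau g \<in> carrier_vec d" unfolding tau using ctg ec by simp
  have twT: "transpose_mat (theta w) = mat_inverse w"
  proof -
    have "transpose_mat (theta w) = transpose_mat (mat_inverse (transpose_mat w))" unfolding theta_def ..
    also have "\<dots> = theta (transpose_mat w)" by (rule transpose_inv[OF SL_transpose[OF w]])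
    also have "\<dots> = mat_inverse w" unfolding theta_def by simp
    finally show ?thesis .
  qed
  have eT1: "transpose_mat (mat_inverse g * theta w) = mat_inverse w * theta g"
    using transpose_mult[OF cgi ctw] twT transpose_inv[OF g] by simp
  have eT: "transpose_mat (mat_inverse g * theta w * g) = transpose_mat g * (mat_inverse w * theta g)"
    using transpose_mult[OF mult_carrier_mat[OF cgi ctw] cg] eT1 by simp
  have ev: "transpose_mat (mat_inverse g * theta w * g) *\<^sub>v e = transpose_mat g *\<^sub>v (mat_inverse w *\<^sub>v tau g)"
    unfolding eT tau using assoc_mult_mat_vec[OF cgT mult_carrier_mat[OF cwi ctg] ec] assoc_mult_mat_vec[OF cwi ctg ec] by simp
  show ?thesis unfolding e_def[symmetric] ev
  proof
    assume h: "transpose_mat g *\<^sub>v (mat_inverse w *\<^sub>v tau g) = e"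
    have "mat_inverse w *\<^sub>v tau g = theta g *\<^sub>v (transpose_mat g *\<^sub>v (mat_inverse w *\<^sub>v tau g))"
      using vec_cancel[OF ctg cgT tg(3), of "mat_inverse w *\<^sub>v tau g"] cwi tc by simp
    also have "\<dots> = theta g *\<^sub>v e" unfolding h ..
    also have "\<dots> = tau g" unfolding tau ..
    finally have "mat_inverse w *\<^sub>v tau g = tau g" .
    hence "w *\<^sub>v tau g = w *\<^sub>v (mat_inverse w *\<^sub>v tau g)" by simp
    also have "\<dots> = tau g" using vec_cancel[OF cw cwi wi(2) tc] .
    finally show "w *\<^sub>v tau g = tau g" .
  next
    assume h: "w *\<^sub>v tau g = tau g"
    have "mat_inverse w *\<^sub>v tau g = mat_inverse w *\<^sub>v (w *\<^sub>v tau g)" unfolding h ..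
    also have "\<dots> = tau g" using vec_cancel[OF cwi cw wi(3) tc] .
    finally have "mat_inverse w *\<^sub>v tau g = tau g" .
    thus "transpose_mat g *\<^sub>v (mat_inverse w *\<^sub>v tau g) = e"
      unfolding tau using vec_cancel[OF cgT ctg tg(2) ec] by simp
  qed
qed


lemma cancelL: fixes A :: "'a::comm_ring_1 mat"
  assumes "A \<in> carrier_mat n n" "B \<in> carrier_mat n n" "X \<in> carrier_mat n m" "A * B = 1\<^sub>m n"
  shows "A * (B * X) = X"
proof -
  have "A * (B * X) = (A * B) * X" by (rule assoc_mult_mat[OF assms(1-3), symmetric])
  thus ?thesis using assms by simp
qed

lemma etaASL: fixes g :: "'a::comm_ring_1 mat"
  assumes g: "g \<in> SL (Suc n)" and w: "w \<in> SL (Suc n)"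
  shows "mat_inverse g * theta w * g \<in> ASL n \<longleftrightarrow> w *\<^sub>v tau g = tau g"
proof -
  have S: "mat_inverse g * theta w * g \<in> SL (Suc n)"
    using SL_mult SL_inv(1)[OF g] theta_SL(1)[OF w] g by blast
  note C = SL_carrier[OF S] and D = SL_det[OF S]
  show ?thesis unfolding ASL_char[OF C] using D last_row_iff[OF C, of n] keyK[OF g w refl] by simp
qed

lemma SO_SL: "a \<in> SO_Q d M \<Longrightarrow> a \<in> SL d" unfolding SO_Q_def by auto
lemma SO_eq: "a \<in> SO_Q d M \<Longrightarrow> transpose_mat a * map_mat of_int M * a = map_mat of_int M" unfolding SO_Q_def by auto

lemma assoc5: fixes A :: "'a::comm_ring_1 mat"
  assumes "A \<in> carrier_mat d d" "B \<in> carrier_mat d d" "Z \<in> carrier_mat d d" "X \<in> carrier_mat d d" "Y \<in> carrier_mat d d"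
  shows "(A * B) * Z * (X * Y) = A * (B * Z * X) * Y"
proof -
  have c1: "A * B * Z \<in> carrier_mat d d" using assms by auto
  have c2: "B * Z \<in> carrier_mat d d" using assms by auto
  have e1: "(A * B) * Z * (X * Y) = ((A * B) * Z * X) * Y" by (rule assoc_mult_mat[OF c1 assms(4,5), symmetric])
  have e2: "(A * B) * Z = A * (B * Z)" by (rule assoc_mult_mat[OF assms(1-3)])
  have e3: "A * (B * Z) * X = A * (B * Z * X)" by (rule assoc_mult_mat[OF assms(1) c2 assms(4)])
  show ?thesis by (rule trans[OF e1]) (simp only: e2 e3)
qed

lemma SO_conj: fixes X :: "'a::comm_ring_1 mat"
  assumes "X \<in> carrier_mat d d" "Y \<in> carrier_mat d d" "Z \<in> carrier_mat d d"
  shows "transpose_mat (X * Y) * Z * (X * Y) = transpose_mat Y * (transpose_mat X * Z * X) * Y"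
  unfolding transpose_mult[OF assms(1,2)]
  by (rule assoc5) (use assms in auto)

lemma SO_mult: fixes a :: "'a::comm_ring_1 mat"
  assumes "a \<in> SO_Q d M" "b \<in> SO_Q d M" "M \<in> carrier_mat d d"
  shows "a * b \<in> SO_Q d M"
proof -
  note ca = SL_carrier[OF SO_SL[OF assms(1)]] and cb = SL_carrier[OF SO_SL[OF assms(2)]]
  have cM: "(map_mat of_int M :: 'a mat) \<in> carrier_mat d d" using assms(3) by simp
  have "transpose_mat (a * b) * map_mat of_int M * (a * b) = (map_mat of_int M :: 'a mat)"
    unfolding SO_conj[OF ca cb cM] SO_eq[OF assms(1)] SO_eq[OF assms(2)] ..
  thus ?thesis using SL_mult[OF SO_SL[OF assms(1)] SO_SL[OF assms(2)]] unfolding SO_Q_def by auto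
qed

lemma SO_inv: fixes a :: "'a::comm_ring_1 mat"
  assumes "a \<in> SO_Q d M" "M \<in> carrier_mat d d"
  shows "mat_inverse a \<in> SO_Q d M"
proof -
  note aS = SO_SL[OF assms(1)]
  note ca = SL_carrier[OF aS] and ci = SL_carrier[OF SL_inv(1)[OF aS]]
  have cM: "(map_mat of_int M :: 'a mat) \<in> carrier_mat d d" using assms(2) by simp
  have "(map_mat of_int M :: 'a mat) = transpose_mat (a * mat_inverse a) * map_mat of_int M * (a * mat_inverse a)"
    using SL_inv(2)[OF aS] cM by simp
  also have "\<dots> = transpose_mat (mat_inverse a) * map_mat of_int M * mat_inverse a"
    unfolding SO_conj[OF ca ci cM] SO_eq[OF assms(1)] ..
  finally show ?thesis using SL_inv(1)[OF aS] unfolding SO_Q_def by auto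
qed

lemma SO_one: assumes "M \<in> carrier_mat d d" shows "(1\<^sub>m d :: 'a::comm_ring_1 mat) \<in> SO_Q d M"
  using assms SL_one unfolding SO_Q_def by auto


lemma tau_carrier: assumes "g \<in> SL d" shows "tau g \<in> carrier_vec d"
proof -
  have "dim_row g = d" using SL_carrier[OF assms] by auto
  thus ?thesis unfolding tau_def using SL_carrier[OF theta_SL(1)[OF assms]] by simp
qed

lemma eta_mult: fixes g :: "'a::comm_ring_1 mat"
  assumes g: "g \<in> SL d" and a: "a \<in> SL d" and b: "b \<in> SL d"
  shows "(mat_inverse g * theta a * g) * (mat_inverse g * theta b * g) = mat_inverse g * theta (a * b) * g"
proof -
  note cg = SL_carrier[OF g] and ci = SL_carrier[OF SL_inv(1)[OF g]]
  note ta = SL_carrier[OF theta_SL(1)[OF a]] and tb = SL_carrier[OF theta_SL(1)[OF b]]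
  have "(mat_inverse g * theta a * g) * (mat_inverse g * theta b * g)
      = mat_inverse g * (theta a * (g * (mat_inverse g * (theta b * g))))"
  proof -
    have c1: "theta a * g \<in> carrier_mat d d" "theta b * g \<in> carrier_mat d d" using cg ta tb by auto
    have c2: "mat_inverse g * (theta b * g) \<in> carrier_mat d d" using c1 ci by auto
    have c3: "g * (mat_inverse g * (theta b * g)) \<in> carrier_mat d d" using c2 cg by auto
    have "mat_inverse g * theta a * g = mat_inverse g * (theta a * g)" using cg ci ta by simp
    moreover have "mat_inverse g * theta b * g = mat_inverse g * (theta b * g)" using cg ci tb by simp
    moreover have "mat_inverse g * (theta a * g) * (mat_inverse g * (theta b * g)) = mat_inverse g * ((theta a * g) * (mat_inverse g * (theta b * g)))"
      by (rule assoc_mult_mat[OF ci c1(1) c2])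
    moreover have "(theta a * g) * (mat_inverse g * (theta b * g)) = theta a * (g * (mat_inverse g * (theta b * g)))"
      by (rule assoc_mult_mat[OF ta cg c2])
    ultimately show ?thesis by simp
  qed
  also have "g * (mat_inverse g * (theta b * g)) = theta b * g"
    by (rule cancelL[where m=d, OF cg ci _ SL_inv(2)[OF g]]) (use tb cg in simp)
  finally have "(mat_inverse g * theta a * g) * (mat_inverse g * theta b * g) = mat_inverse g * (theta a * (theta b * g))" .
  moreover have "mat_inverse g * (theta a * theta b) * g = mat_inverse g * ((theta a * theta b) * g)"
    by (rule assoc_mult_mat[OF ci mult_carrier_mat[OF ta tb] cg])
  moreover have "(theta a * theta b) * g = theta a * (theta b * g)" by (rule assoc_mult_mat[OF ta tb cg])
  ultimately show ?thesis unfolding theta_mult[OF a b] by simp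
qed

lemma eta_one: fixes g :: "'a::comm_ring_1 mat" assumes g: "g \<in> SL d"
  shows "mat_inverse g * theta (1\<^sub>m d) * g = 1\<^sub>m d"
  using SL_inv(3)[OF g] SL_carrier[OF SL_inv(1)[OF g]] unfolding theta_one by simp

theorem lemma3p2:
  fixes d :: nat and M :: "int mat" and g :: "'a::comm_ring_1 mat"
  assumes "d \<ge> 1"
    and "M \<in> carrier_mat d d" and "transpose_mat M = M"
    and "g \<in> SL d"
  shows "L_grp d M g \<subseteq> SO_Q d M \<times> ASL (d - 1)
       \<and> (1\<^sub>m d, 1\<^sub>m d) \<in> L_grp d M g
       \<and> (\<forall>p \<in> L_grp d M g. \<forall>q \<in> L_grp d M g. (fst p * fst q, snd p * snd q) \<in> L_grp d M g)
       \<and> (\<forall>p \<in> L_grp d M g. (mat_inverse (fst p), mat_inverse (snd p)) \<in> L_grp d M g)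
       \<and> L_grp d M g = stabilizer d M g"
proof -
  obtain n where dn: "d = Suc n" using assms(1) by (cases d) auto
  note g = assms(4) and cM = assms(2)
  define eta where "eta w = mat_inverse g * theta w * g" for w :: "'a mat"
  have L: "L_grp d M g = {(w, eta w) | w. w \<in> H_stab d M (tau g)}"
    unfolding L_grp_def eta_def ..
  have HS: "w \<in> H_stab d M (tau g) \<longleftrightarrow> w \<in> SO_Q d M \<and> w *\<^sub>v tau g = tau g" for w
    unfolding H_stab_def by auto
  have etaSL: "w \<in> SL d \<Longrightarrow> eta w \<in> SL d" for w
    unfolding eta_def using SL_mult SL_inv(1)[OF g] theta_SL(1) g by blast
  have etaA: "w \<in> SL d \<Longrightarrow> eta w \<in> ASL (d - 1) \<longleftrightarrow> w *\<^sub>v tau g = tau g" for w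
    unfolding eta_def dn using etaASL g dn by auto
  have tc: "tau g \<in> carrier_vec d" using tau_carrier[OF g] .
  have P1: "L_grp d M g \<subseteq> SO_Q d M \<times> ASL (d - 1)"
    unfolding L using HS etaA SO_SL by blast
  have P2: "(1\<^sub>m d, 1\<^sub>m d) \<in> L_grp d M g"
  proof -
    have "1\<^sub>m d \<in> H_stab d M (tau g)" unfolding HS using SO_one[OF cM] tc by simp
    moreover have "eta (1\<^sub>m d) = 1\<^sub>m d" unfolding eta_def using eta_one[OF g] .
    ultimately show ?thesis unfolding L by (auto intro!: exI[of _ "1\<^sub>m d"])
  qed
  have Hmult: "a \<in> H_stab d M (tau g) \<Longrightarrow> b \<in> H_stab d M (tau g) \<Longrightarrow> a * b \<in> H_stab d M (tau g)" for a b
  proof -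
    assume a: "a \<in> H_stab d M (tau g)" and b: "b \<in> H_stab d M (tau g)"
    have ca: "a \<in> carrier_mat d d" and cb: "b \<in> carrier_mat d d"
      using a b HS SO_SL SL_carrier by blast+
    have "(a * b) *\<^sub>v tau g = a *\<^sub>v (b *\<^sub>v tau g)" using ca cb tc by simp
    also have "\<dots> = tau g" using a b HS by simp
    finally show ?thesis unfolding HS using SO_mult[OF _ _ cM] a b HS by blast
  qed
  have Hinv: "a \<in> H_stab d M (tau g) \<Longrightarrow> mat_inverse a \<in> H_stab d M (tau g)" for a
  proof -
    assume a: "a \<in> H_stab d M (tau g)"
    have aS: "a \<in> SL d" using a HS SO_SL by blast
    have "mat_inverse a *\<^sub>v tau g = mat_inverse a *\<^sub>v (a *\<^sub>v tau g)" using a HS by simp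
    also have "\<dots> = tau g" by (rule vec_cancel[OF SL_carrier[OF SL_inv(1)[OF aS]] SL_carrier[OF aS] SL_inv(3)[OF aS] tc])
    finally show ?thesis unfolding HS using SO_inv[OF _ cM] a HS by blast
  qed
  have HSL: "a \<in> H_stab d M (tau g) \<Longrightarrow> a \<in> SL d" for a using HS SO_SL by blast
  have P3: "\<forall>p \<in> L_grp d M g. \<forall>q \<in> L_grp d M g. (fst p * fst q, snd p * snd q) \<in> L_grp d M g"
  proof (intro ballI)
    fix p q assume "p \<in> L_grp d M g" "q \<in> L_grp d M g"
    then obtain a b where p: "p = (a, eta a)" and q: "q = (b, eta b)" and a: "a \<in> H_stab d M (tau g)" and b: "b \<in> H_stab d M (tau g)"
      unfolding L by auto
    have "eta a * eta b = eta (a * b)" unfolding eta_def by (rule eta_mult[OF g HSL[OF a] HSL[OF b]])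
    thus "(fst p * fst q, snd p * snd q) \<in> L_grp d M g" unfolding L p q using Hmult[OF a b] by auto
  qed
  have P4: "\<forall>p \<in> L_grp d M g. (mat_inverse (fst p), mat_inverse (snd p)) \<in> L_grp d M g"
  proof
    fix p assume "p \<in> L_grp d M g"
    then obtain a where p: "p = (a, eta a)" and a: "a \<in> H_stab d M (tau g)" unfolding L by auto
    note aS = HSL[OF a]
    have "eta a * eta (mat_inverse a) = eta (a * mat_inverse a)" unfolding eta_def by (rule eta_mult[OF g aS SL_inv(1)[OF aS]])
    also have "\<dots> = 1\<^sub>m d" unfolding SL_inv(2)[OF aS] eta_def using eta_one[OF g] .
    finally have "mat_inverse (eta a) = eta (mat_inverse a)"
      by (intro SL_inv_unique[OF etaSL[OF aS]] SL_carrier[OF etaSL[OF SL_inv(1)[OF aS]]])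
    thus "(mat_inverse (fst p), mat_inverse (snd p)) \<in> L_grp d M g" unfolding L p using Hinv[OF a] by auto
  qed
  have P5: "L_grp d M g = stabilizer d M g"
  proof
    show "L_grp d M g \<subseteq> stabilizer d M g"
    proof
      fix p assume pL: "p \<in> L_grp d M g"
      then obtain a where p: "p = (a, eta a)" and a: "a \<in> H_stab d M (tau g)" unfolding L by auto
      note aS = HSL[OF a]
      note cg = SL_carrier[OF g] and ci = SL_carrier[OF SL_inv(1)[OF g]] and ta = SL_carrier[OF theta_SL(1)[OF aS]]
      have caT: "transpose_mat a \<in> carrier_mat d d" using SL_carrier[OF aS] by simp
      have "act g p = transpose_mat a * g * (mat_inverse g * theta a * g)"
        unfolding act_def p eta_def using inv_theta[OF aS] by simp
      also have "\<dots> = transpose_mat a * (g * (mat_inverse g * (theta a * g)))"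
        using assoc_mult_mat[OF caT cg mult_carrier_mat[OF mult_carrier_mat[OF ci ta] cg]] cg ci ta by simp
      also have "g * (mat_inverse g * (theta a * g)) = theta a * g"
        by (rule cancelL[where m=d, OF cg ci _ SL_inv(2)[OF g]]) (use ta cg in simp)
      also have "transpose_mat a * (theta a * g) = g"
        by (rule cancelL[where m=d, OF caT ta cg theta_SL(2)[OF aS]])
      finally have "act g p = g" .
      thus "p \<in> stabilizer d M g" unfolding stabilizer_def using P1 pL by auto
    qed
  next
    show "stabilizer d M g \<subseteq> L_grp d M g"
    proof
      fix p assume "p \<in> stabilizer d M g"
      then obtain r e where p: "p = (r, e)" and r: "r \<in> SO_Q d M" and e: "e \<in> ASL (d - 1)" and ac: "act g (r, e) = g"
        unfolding stabilizer_def by auto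
      have rS: "r \<in> SL d" using SO_SL[OF r] .
      have ce: "e \<in> carrier_mat d d" using e ASL_char[of e "d - 1"] unfolding ASL_def dn by auto
      note cg = SL_carrier[OF g] and ci = SL_carrier[OF SL_inv(1)[OF g]] and tr = SL_carrier[OF theta_SL(1)[OF rS]]
      have crT: "transpose_mat r \<in> carrier_mat d d" using SL_carrier[OF rS] by simp
      have ac2: "transpose_mat r * (g * e) = g"
        using ac unfolding act_def using inv_theta[OF rS] assoc_mult_mat[OF crT cg ce] by simp
      have "eta r = mat_inverse g * (theta r * g)" unfolding eta_def using ci tr cg by simp
      also have "\<dots> = mat_inverse g * (theta r * (transpose_mat r * (g * e)))" unfolding ac2 ..
      also have "theta r * (transpose_mat r * (g * e)) = g * e"
        by (rule cancelL[where m=d, OF tr crT _ theta_SL(3)[OF rS]]) (use cg ce in simp)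
      also have "mat_inverse g * (g * e) = e"
        by (rule cancelL[where m=d, OF ci cg ce SL_inv(3)[OF g]])
      finally have er: "eta r = e" .
      hence "r *\<^sub>v tau g = tau g" using etaA[OF rS] e by simp
      hence "r \<in> H_stab d M (tau g)" unfolding HS using r by simp
      thus "p \<in> L_grp d M g" unfolding L p using er by auto
    qed
  qed
  show ?thesis using P1 P2 P3 P4 P5 by blast
qed

end
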